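(* Let $\Lambda\Subset\mathbb X$ and suppose $\rho:\mathbf F\to\mathbb C$ satisfies \[ \rho(\{s\}\cup T)=\sum_{N\subset\Lambda\setminus T}z(s)\,\gamma(s,N\mid T)\,\rho(T\cup N) \] for all $s\in\mathbb X$ and $T\Subset\mathbb X\setminus\{s\}$. Then there exists $c\in\mathbb C$ such that $\rho(X)=Z(X,\Lambda)\,c$ for all $X\Subset\mathbb X$. In particular, if $\rho(\varnothing)\neq0$, then $Z(\Lambda)\neq0$ and $R(X,\Lambda)=\rho(X)/\rho(\varnothing)$ for all $X\Subset\mathbb X$.
   Context: $\mathbb X$ is a finite or countably infinite set, $X\Subset\mathbb X$ means finite subset, $\mathbf F$ is the set of finite subsets. Fix $z:\mathbb X\to\mathbb C$, $W:\mathbf F\to\mathbb C$; $z^X=\prod_{y\in X}z(y)$. Conditional interaction: $W(X\mid B)=\prod_{C\subset B}W(X\cup C)$ if $X\cap B=\varnothing$, $W(X\mid B)=0$ if $X=\{y\}$ with $y\in B$, $W(X\mid B)=1$ otherwise. Boltzmann factor $\kappa(X\mid B)=\prod_{\varnothing\neq S\subset X}W(S\mid B)$, $\kappa(X)=\kappa(X\mid\varnothing)$, and $\kappa(s\mid B)=\kappa(\{s\}\mid B)$. Kernel: $\gamma(s,N\mid B)=\sum_{M\subset N}(-1)^{|N\setminus M|}\kappa(s\mid B\cup M)$ for $s\in\mathbb X$, $N,B\in\mathbf F$. Partition functions $Z(X,\Lambda)=\sum_{Y\subset\Lambda\setminus X}z^{X\cup Y}\kappa(X\cup Y)$, $Z(\Lambda)=Z(\varnothing,\Lambda)$;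 correlations $R(X,\Lambda)=Z(X,\Lambda)/Z(\Lambda)$ when $Z(\Lambda)\neq0$ (defined for all $X\Subset\mathbb X$, not only $X\subset\Lambda$). *)

theory Defs
  imports Complex_Main "HOL-Library.Countable"
begin

text \<open>Ground set X is the type 'a (countable); finite subsets are finite sets of type 'a set.
  z :: 'a => complex, W :: 'a set => complex (only evaluated on finite sets).\<close>

definition W_cond :: "('a set \<Rightarrow> complex) \<Rightarrow> 'a set \<Rightarrow> 'a set \<Rightarrow> complex" where
  "W_cond W X B =
     (if X \<inter> B = {} then (\<Prod>C\<in>Pow B. W (X \<union> C))
      else if (\<exists>y. X = {y} \<and> y \<in> B) then 0 else 1)"

definition kappa :: "('a set \<Rightarrow> complex) \<Rightarrow> 'a set \<Rightarrow> 'a set \<Rightarrow> complex" where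
  "kappa W X B = (\<Prod>S\<in>Pow X - {{}}. W_cond W S B)"

definition gamma :: "('a set \<Rightarrow> complex) \<Rightarrow> 'a \<Rightarrow> 'a set \<Rightarrow> 'a set \<Rightarrow> complex" where
  "gamma W s N B = (\<Sum>M\<in>Pow N. (-1) ^ card (N - M) * kappa W {s} (B \<union> M))"

definition Zpart :: "('a \<Rightarrow> complex) \<Rightarrow> ('a set \<Rightarrow> complex) \<Rightarrow> 'a set \<Rightarrow> 'a set \<Rightarrow> complex" where
  "Zpart z W X \<Lambda> = (\<Sum>Y\<in>Pow (\<Lambda> - X). (\<Prod>y\<in>X \<union> Y. z y) * kappa W (X \<union> Y) {})"

definition Rcorr :: "('a \<Rightarrow> complex) \<Rightarrow> ('a set \<Rightarrow> complex) \<Rightarrow> 'a set \<Rightarrow> 'a set \<Rightarrow> complex" where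
  "Rcorr z W X \<Lambda> = Zpart z W X \<Lambda> / Zpart z W {} \<Lambda>"

end

theory Submission
  imports Defs
begin

lemma alt1: "finite V \<Longrightarrow> (\<Sum>K\<in>Pow V. (-1::complex) ^ card K) = (if V = {} then 1 else 0)"
proof -
  assume f: "finite V"
  have "(\<Prod>x\<in>V. (-1::complex) + 1) = (\<Sum>X\<in>Pow V. (\<Prod>x\<in>X. -1) * (\<Prod>x\<in>V-X. 1))"
    by (rule prod_add[OF f])
  then show ?thesis using f by (auto simp: prod_constant power_0_left card_eq_0_iff)
qed

lemma alt2: "finite V \<Longrightarrow> (\<Sum>K\<in>Pow V. (-1::complex) ^ card (V - K)) = (if V = {} then 1 else 0)"
proof -
  assume f: "finite V"
  have "(\<Prod>x\<in>V. (1::complex) + -1) = (\<Sum>X\<in>Pow V. (\<Prod>x\<in>X. 1) * (\<Prod>x\<in>V-X. -1))"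
    by (rule prod_add[OF f])
  then show ?thesis using f by (auto simp: prod_constant power_0_left card_eq_0_iff)
qed

lemma reidx: assumes "finite D" "Y \<subseteq> D"
  shows "(\<Sum>K\<in>Pow (D - Y). g K) = (\<Sum>V\<in>{V\<in>Pow D. Y \<subseteq> V}. g (V - Y))"
  by (rule sum.reindex_bij_witness[where i="\<lambda>V. V - Y" and j="\<lambda>K. Y \<union> K"]) (use assms in \<open>auto simp: Un_Diff intro!: arg_cong[where f=g]\<close>)

lemma mob_lower: assumes "finite V"
  shows "(\<Sum>A\<in>Pow V. \<Sum>B\<in>Pow A. (-1::complex) ^ card (A - B) * f B) = f V"
proof -
  have "(\<Sum>A\<in>Pow V. \<Sum>B\<in>Pow A. (-1::complex) ^ card (A - B) * f B)
     = (\<Sum>A\<in>Pow V. \<Sum>B\<in>{B. B \<in> Pow V \<and> B \<subseteq> A}. (-1::complex) ^ card (A - B) * f B)"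
    by (intro sum.cong) auto
  also have "\<dots> = (\<Sum>B\<in>Pow V. \<Sum>A\<in>{A. A \<in> Pow V \<and> B \<subseteq> A}. (-1::complex) ^ card (A - B) * f B)"
    by (rule sum.swap_restrict) (use assms in auto)
  also have "\<dots> = (\<Sum>B\<in>Pow V. f B * (\<Sum>K\<in>Pow (V - B). (-1::complex) ^ card K))"
  proof (rule sum.cong[OF refl])
    fix B assume B: "B \<in> Pow V"
    have "(\<Sum>K\<in>Pow (V - B). (-1::complex) ^ card K) = (\<Sum>A\<in>{A\<in>Pow V. B \<subseteq> A}. (-1::complex) ^ card (A - B))"
      using B by (subst reidx[OF assms]) auto
    then show "(\<Sum>A\<in>{A. A \<in> Pow V \<and> B \<subseteq> A}. (-1::complex) ^ card (A - B) * f B) = f B * (\<Sum>K\<in>Pow (V - B). (-1::complex) ^ card K)"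
      by (simp add: sum_distrib_left mult.commute)
  qed
  also have "\<dots> = (\<Sum>B\<in>Pow V. if B = V then f B else 0)"
    using assms by (intro sum.cong refl) (auto simp: alt1 finite_subset)
  also have "\<dots> = f V" using assms by (simp add: sum.delta')
  finally show ?thesis .
qed

lemma mob_upper: assumes "finite D"
  shows "(\<Sum>Y\<in>Pow D. \<Sum>Y'\<in>Pow (D - Y). (-1::complex) ^ card Y' * f (Y \<union> Y')) = f {}"
proof -
  have "(\<Sum>Y\<in>Pow D. \<Sum>Y'\<in>Pow (D - Y). (-1::complex) ^ card Y' * f (Y \<union> Y'))
     = (\<Sum>Y\<in>Pow D. \<Sum>V\<in>{V. V \<in> Pow D \<and> Y \<subseteq> V}. (-1::complex) ^ card (V - Y) * f V)"
  proof (rule sum.cong[OF refl])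
    fix Y assume "Y \<in> Pow D"
    then show "(\<Sum>Y'\<in>Pow (D - Y). (-1::complex) ^ card Y' * f (Y \<union> Y'))
     = (\<Sum>V\<in>{V. V \<in> Pow D \<and> Y \<subseteq> V}. (-1::complex) ^ card (V - Y) * f V)"
      by (subst reidx[OF assms]) (auto intro!: sum.cong simp: Un_absorb1)
  qed
  also have "\<dots> = (\<Sum>V\<in>Pow D. \<Sum>Y\<in>{Y. Y \<in> Pow D \<and> Y \<subseteq> V}. (-1::complex) ^ card (V - Y) * f V)"
    by (rule sum.swap_restrict) (use assms in auto)
  also have "\<dots> = (\<Sum>V\<in>Pow D. f V * (\<Sum>Y\<in>Pow V. (-1::complex) ^ card (V - Y)))"
    by (intro sum.cong refl) (auto simp: sum_distrib_left mult.commute intro!: sum.cong)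
  also have "\<dots> = (\<Sum>V\<in>Pow D. if V = {} then f V else 0)"
    using assms by (intro sum.cong refl) (auto simp: alt2 finite_subset)
  also have "\<dots> = f {}" using assms by (simp add: sum.delta')
  finally show ?thesis .
qed

lemma dd: "A - B - C = A - (B \<union> C)" by blast

lemma kappa_single: "kappa W {s} B = W_cond W {s} B"
proof -
  have "Pow {s} - {{}} = {{s}}" by auto
  then show ?thesis by (simp add: kappa_def)
qed

lemma kappa_zero: "s \<in> B \<Longrightarrow> kappa W {s} B = 0"
  by (simp add: kappa_single W_cond_def)

lemma kappa_empty: "kappa W {} B = 1"
  by (simp add: kappa_def)

lemma kappa_insert: assumes "finite F" "x \<notin> F"
  shows "kappa W (insert x F) {} = kappa W F {} * kappa W {x} F"
proof -
  have wc: "W_cond W S {} = W S" for S by (simp add: W_cond_def)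
  have "Pow (insert x F) - {{}} = (Pow F - {{}}) \<union> insert x ` Pow F" by (auto simp: Pow_insert)
  then have "kappa W (insert x F) {} = (\<Prod>S\<in>(Pow F - {{}}) \<union> insert x ` Pow F. W S)"
    by (simp add: kappa_def wc)
  also have "\<dots> = (\<Prod>S\<in>Pow F - {{}}. W S) * (\<Prod>S\<in>insert x ` Pow F. W S)"
    by (rule prod.union_disjoint) (use assms in auto)
  also have "(\<Prod>S\<in>insert x ` Pow F. W S) = (\<Prod>C\<in>Pow F. W (insert x C))"
  proof (subst prod.reindex)
    show "inj_on (insert x) (Pow F)" using assms unfolding inj_on_def
      by (metis PowD insert_ident subset_iff)
  qed simp
  also have "\<dots> = kappa W {x} F"
    using assms by (simp add: kappa_single W_cond_def)
  finally show ?thesis by (simp add: kappa_def wc)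
qed

lemma gamma_sum: "finite U \<Longrightarrow> (\<Sum>N\<in>Pow U. gamma W s N T) = kappa W {s} (T \<union> U)"
  unfolding gamma_def by (rule mob_lower)

theorem proposition6p1:
  fixes z :: "'a::countable \<Rightarrow> complex"
    and W :: "'a set \<Rightarrow> complex"
    and \<Lambda> :: "'a set"
    and \<rho> :: "'a set \<Rightarrow> complex"
  assumes fin: "finite \<Lambda>"
    and eq: "\<And>s T. finite T \<Longrightarrow> s \<notin> T \<Longrightarrow>
        \<rho> (insert s T) = (\<Sum>N\<in>Pow (\<Lambda> - T). z s * gamma W s N T * \<rho> (T \<union> N))"
  shows "(\<exists>c::complex. \<forall>X. finite X \<longrightarrow> \<rho> X = Zpart z W X \<Lambda> * c)
         \<and> (\<rho> {} \<noteq> 0 \<longrightarrow> Zpart z W {} \<Lambda> \<noteq> 0 \<and>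
              (\<forall>X. finite X \<longrightarrow> Rcorr z W X \<Lambda> = \<rho> X / \<rho> {}))"
proof -
  define \<phi> where "\<phi> A = (\<Sum>Y\<in>Pow (\<Lambda> - A). (-1::complex) ^ card Y * \<rho> (A \<union> Y))" for A
  have inv: "\<rho> X = (\<Sum>Y\<in>Pow (\<Lambda> - X). \<phi> (X \<union> Y))" for X
  proof -
    have "(\<Sum>Y\<in>Pow (\<Lambda> - X). \<phi> (X \<union> Y))
      = (\<Sum>Y\<in>Pow (\<Lambda> - X). \<Sum>Y'\<in>Pow ((\<Lambda> - X) - Y). (-1::complex) ^ card Y' * \<rho> (X \<union> (Y \<union> Y')))"
      unfolding \<phi>_def by (intro sum.cong refl) (simp_all add: dd Un_assoc)
    also have "\<dots> = \<rho> (X \<union> {})"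
      by (rule mob_upper[where f="\<lambda>V. \<rho> (X \<union> V)"]) (use fin in auto)
    finally show ?thesis by simp
  qed
  have gsum: "(\<Sum>N\<in>Pow (\<Lambda> - T). gamma W s N T * \<rho> (T \<union> N))
      = (\<Sum>U\<in>Pow (\<Lambda> - T). kappa W {s} (T \<union> U) * \<phi> (T \<union> U))" for s T
  proof -
    let ?D = "\<Lambda> - T"
    have fD: "finite ?D" using fin by auto
    have "(\<Sum>U\<in>Pow ?D. kappa W {s} (T \<union> U) * \<phi> (T \<union> U))
       = (\<Sum>U\<in>Pow ?D. \<Sum>N\<in>{N. N \<in> Pow ?D \<and> N \<subseteq> U}. gamma W s N T * \<phi> (T \<union> U))"
    proof (rule sum.cong[OF refl])
      fix U assume U: "U \<in> Pow ?D"
      then have fU: "finite U" using fD finite_subset by blast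
      have "{N. N \<in> Pow ?D \<and> N \<subseteq> U} = Pow U" using U by auto
      then show "kappa W {s} (T \<union> U) * \<phi> (T \<union> U) = (\<Sum>N\<in>{N. N \<in> Pow ?D \<and> N \<subseteq> U}. gamma W s N T * \<phi> (T \<union> U))"
        by (simp only:) (simp add: gamma_sum[OF fU] sum_distrib_right[symmetric])
    qed
    also have "\<dots> = (\<Sum>N\<in>Pow ?D. \<Sum>U\<in>{U. U \<in> Pow ?D \<and> N \<subseteq> U}. gamma W s N T * \<phi> (T \<union> U))"
      by (rule sum.swap_restrict) (use fD in auto)
    also have "\<dots> = (\<Sum>N\<in>Pow ?D. gamma W s N T * \<rho> (T \<union> N))"
    proof (rule sum.cong[OF refl])
      fix N assume N: "N \<in> Pow ?D"
      have "\<rho> (T \<union> N) = (\<Sum>Y\<in>Pow (?D - N). \<phi> (T \<union> N \<union> Y))"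
        by (subst inv) (simp add: dd)
      also have "\<dots> = (\<Sum>V\<in>{V\<in>Pow ?D. N \<subseteq> V}. \<phi> (T \<union> N \<union> (V - N)))"
        by (rule reidx) (use fD N in auto)
      also have "\<dots> = (\<Sum>V\<in>{V\<in>Pow ?D. N \<subseteq> V}. \<phi> (T \<union> V))"
        by (intro sum.cong refl) (auto intro!: arg_cong[where f=\<phi>])
      finally show "(\<Sum>U\<in>{U. U \<in> Pow ?D \<and> N \<subseteq> U}. gamma W s N T * \<phi> (T \<union> U)) = gamma W s N T * \<rho> (T \<union> N)"
        by (simp add: sum_distrib_left)
    qed
    finally show ?thesis by simp
  qed
  define \<psi> where "\<psi> s A = \<phi> (insert s A) - z s * kappa W {s} A * \<phi> A" for s A
  have key: "(\<Sum>U\<in>Pow (\<Lambda> - insert s T). \<psi> s (T \<union> U)) = 0" if T: "finite T" "s \<notin> T" for s T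
  proof -
    have "(\<Sum>U\<in>Pow (\<Lambda> - T). kappa W {s} (T \<union> U) * \<phi> (T \<union> U))
       = (\<Sum>U\<in>Pow (\<Lambda> - insert s T). kappa W {s} (T \<union> U) * \<phi> (T \<union> U))"
      by (rule sum.mono_neutral_right) (use fin in \<open>auto simp: kappa_zero\<close>)
    then have "\<rho> (insert s T) = z s * (\<Sum>U\<in>Pow (\<Lambda> - insert s T). kappa W {s} (T \<union> U) * \<phi> (T \<union> U))"
      using eq[OF T] gsum[of s T] by (simp add: sum_distrib_left[symmetric] mult.assoc)
    moreover have "\<rho> (insert s T) = (\<Sum>U\<in>Pow (\<Lambda> - insert s T). \<phi> (insert s (T \<union> U)))"
      by (subst inv) simp
    ultimately show ?thesis
      by (simp add: \<psi>_def sum_subtractf sum_distrib_left mult.assoc)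
  qed
  have vanish: "finite A \<longrightarrow> s \<notin> A \<longrightarrow> \<psi> s A = 0" for s A
  proof (induction A rule: measure_induct_rule[of "\<lambda>A. card (\<Lambda> - insert s A)"])
    case (less A)
    show ?case
    proof (intro impI)
      assume A: "finite A" "s \<notin> A"
      have fP: "finite (Pow (\<Lambda> - insert s A))" using fin by simp
      have "0 = (\<Sum>U\<in>Pow (\<Lambda> - insert s A). \<psi> s (A \<union> U))" using key[OF A] by simp
      also have "\<dots> = \<psi> s (A \<union> {}) + (\<Sum>U\<in>Pow (\<Lambda> - insert s A) - {{}}. \<psi> s (A \<union> U))"
        by (rule sum.remove[OF fP]) simp
      also have "(\<Sum>U\<in>Pow (\<Lambda> - insert s A) - {{}}. \<psi> s (A \<union> U)) = 0"
      proof (rule sum.neutral, intro ballI)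
        fix U assume U: "U \<in> Pow (\<Lambda> - insert s A) - {{}}"
        have "\<Lambda> - insert s (A \<union> U) \<subset> \<Lambda> - insert s A" using U by auto
        then have "card (\<Lambda> - insert s (A \<union> U)) < card (\<Lambda> - insert s A)"
          by (rule psubset_card_mono[rotated]) (use fin in simp)
        moreover have "finite (A \<union> U)" using A U fin finite_subset by auto
        moreover have "s \<notin> A \<union> U" using A U by auto
        ultimately show "\<psi> s (A \<union> U) = 0" using less by blast
      qed
      finally show "\<psi> s A = 0" by simp
    qed
  qed
  have phiF: "finite A \<Longrightarrow> \<phi> A = (\<Prod>y\<in>A. z y) * kappa W A {} * \<phi> {}" for A
  proof (induction A rule: finite_induct)
    case empty then show ?case by (simp add: kappa_empty)
  next
    case (insert x F)
    have "\<phi> (insert x F) = z x * kappa W {x} F * \<phi> F"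
      using vanish[of F x] insert.hyps by (simp add: \<psi>_def)
    then show ?case using insert by (simp add: kappa_insert mult_ac)
  qed
  have main: "\<rho> X = Zpart z W X \<Lambda> * \<phi> {}" if X: "finite X" for X
  proof -
    have "\<rho> X = (\<Sum>Y\<in>Pow (\<Lambda> - X). (\<Prod>y\<in>X \<union> Y. z y) * kappa W (X \<union> Y) {} * \<phi> {})"
      unfolding inv[of X] using X fin by (intro sum.cong refl phiF) (auto intro: finite_subset)
    then show ?thesis by (simp add: Zpart_def sum_distrib_right)
  qed
  show ?thesis
  proof (intro conjI impI allI)
    show "\<exists>c. \<forall>X. finite X \<longrightarrow> \<rho> X = Zpart z W X \<Lambda> * c" using main by blast
  next
    assume h: "\<rho> {} \<noteq> 0"
    then show "Zpart z W {} \<Lambda> \<noteq> 0" using main[of "{}"] by auto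
  next
    fix X :: "'a set"
    assume h: "\<rho> {} \<noteq> 0" and X: "finite X"
    show "Rcorr z W X \<Lambda> = \<rho> X / \<rho> {}"
      using main[of "{}"] main[OF X] h by (auto simp: Rcorr_def)
  qed
qed

end
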